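(* Let $f=(f_1,f_2):\mathbb{R}\times\mathbb{R}^2,\mathbf 0\to\mathbb{R}^2,\mathbf 0$ be an analytic germ, $f_t(x)=f(t,x)$, $J=\partial(f_1,f_2)/\partial(x_1,x_2)$, $F_i=\partial(f_i,J)/\partial(x_1,x_2)$, and assume $$\dim_{\mathbb{R}}\mathcal{O}_3/\langle t,f_1,f_2\rangle<\infty,\ \dim_{\mathbb{R}}\mathcal{O}_3/\langle t,F_1,F_2\rangle<\infty,\ J(\mathbf{0})=0,\ \dim_{\mathbb{R}}\mathcal{O}_3/\langle t,\partial J/\partial x_1,\partial J/\partial x_2\rangle<\infty,$$ and that $V(I')=\{\mathbf 0\}$, where $I'=\langle J,F_1,F_2,\partial(F_1,J)/\partial(x_1,x_2),\partial(F_2,J)/\partial(x_1,x_2)\rangle$. Let $r_0>0$ with $f_0^{-1}(\mathbf 0)\cap D^2(r_0)=\{\mathbf 0\}$, $\tilde D^2_t(\delta)=f_t^{-1}(D^2(\delta))\cap D^2(r_0)$, let $V(I)$ be a representative of the zero germ of $I=\langle J,F_1,F_2\rangle$, and $\Sigma_t=\{x\in\tilde D^2_t(\delta):(t,x)\in V(I)\}$. Suppose $0<\delta\ll1$ and $t\neq0$ is sufficiently close to zero. Then the set of critical points of $f_t:\tilde D^2_t(\delta)\to D^2(\delta)$ consists of fold points and the finite family $\Sigma_t$ of cusp points.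
   Context: $\mathcal{O}_3=\mathbb{R}\{t,x_1,x_2\}$; $V(\cdot)$ denotes real zero sets near the origin. $D^2(\rho)$ is the closed disc of radius $\rho$. Fold and cusp points are in Whitney's sense. *)

theory Defs
  imports "HOL-Analysis.Analysis"
begin

text \<open>Functions of (t, x1, x2) are represented curried: real => real => real => real.
  Real-analyticity at a point: a convergent (unconditionally = absolutely summable)
  triple power series representing the function on a neighbourhood.\<close>

definition analytic_at :: "real \<times> real \<times> real \<Rightarrow> (real \<Rightarrow> real \<Rightarrow> real \<Rightarrow> real) \<Rightarrow> bool" where
  "analytic_at p g \<longleftrightarrow> (case p of (t0, a0, b0) \<Rightarrow>
     (\<exists>r>0. \<exists>c :: nat \<times> nat \<times> nat \<Rightarrow> real.
        \<forall>t a b. \<bar>t - t0\<bar> < r \<and> \<bar>a - a0\<bar> < r \<and> \<bar>b - b0\<bar> < r \<longrightarrow>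
          ((\<lambda>(i, j, k). c (i, j, k) * (t - t0) ^ i * (a - a0) ^ j * (b - b0) ^ k)
             has_sum g t a b) UNIV))"

text \<open>Representatives of elements of O_3 = R{t,x1,x2}: functions analytic at the origin.\<close>
definition analytic0 :: "(real \<Rightarrow> real \<Rightarrow> real \<Rightarrow> real) \<Rightarrow> bool" where
  "analytic0 g \<longleftrightarrow> analytic_at (0, 0, 0) g"

definition near0 :: "(real \<Rightarrow> real \<Rightarrow> real \<Rightarrow> bool) \<Rightarrow> bool" where
  "near0 P \<longleftrightarrow> (\<exists>e>0. \<forall>t a b. \<bar>t\<bar> < e \<and> \<bar>a\<bar> < e \<and> \<bar>b\<bar> < e \<longrightarrow> P t a b)"

definition tcoord :: "real \<Rightarrow> real \<Rightarrow> real \<Rightarrow> real" where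
  "tcoord = (\<lambda>t a b. t)"

definition in_ideal :: "(real \<Rightarrow> real \<Rightarrow> real \<Rightarrow> real) list \<Rightarrow> (real \<Rightarrow> real \<Rightarrow> real \<Rightarrow> real) \<Rightarrow> bool" where
  "in_ideal gs g \<longleftrightarrow> (\<exists>as. length as = length gs \<and> (\<forall>h\<in>set as. analytic0 h) \<and>
     near0 (\<lambda>t a b. g t a b = (\<Sum>i<length gs. (as ! i) t a b * (gs ! i) t a b)))"

text \<open>dim_R O_3 / <gs> < infinity: finitely many germs span O_3 modulo the ideal.\<close>
definition finite_codim :: "(real \<Rightarrow> real \<Rightarrow> real \<Rightarrow> real) list \<Rightarrow> bool" where
  "finite_codim gs \<longleftrightarrow> (\<exists>es. (\<forall>e\<in>set es. analytic0 e) \<and>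
     (\<forall>g. analytic0 g \<longrightarrow> (\<exists>c :: nat \<Rightarrow> real.
        in_ideal gs (\<lambda>t a b. g t a b - (\<Sum>j<length es. c j * (es ! j) t a b)))))"

definition zero_set_is_origin :: "(real \<Rightarrow> real \<Rightarrow> real \<Rightarrow> real) list \<Rightarrow> bool" where
  "zero_set_is_origin gs \<longleftrightarrow> near0 (\<lambda>t a b. (\<forall>g\<in>set gs. g t a b = 0) \<longleftrightarrow> (t = 0 \<and> a = 0 \<and> b = 0))"

definition zero_set_rep :: "(real \<Rightarrow> real \<Rightarrow> real \<Rightarrow> real) list \<Rightarrow> (real \<times> real \<times> real) set \<Rightarrow> bool" where
  "zero_set_rep gs W \<longleftrightarrow> near0 (\<lambda>t a b. (t, a, b) \<in> W \<longleftrightarrow> (\<forall>g\<in>set gs. g t a b = 0))"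

definition dx1 :: "(real \<Rightarrow> real \<Rightarrow> real) \<Rightarrow> real \<Rightarrow> real \<Rightarrow> real" where
  "dx1 g a b = deriv (\<lambda>s. g s b) a"

definition dx2 :: "(real \<Rightarrow> real \<Rightarrow> real) \<Rightarrow> real \<Rightarrow> real \<Rightarrow> real" where
  "dx2 g a b = deriv (\<lambda>s. g a s) b"

definition jac2 :: "(real \<Rightarrow> real \<Rightarrow> real) \<Rightarrow> (real \<Rightarrow> real \<Rightarrow> real) \<Rightarrow> real \<Rightarrow> real \<Rightarrow> real" where
  "jac2 g h a b = dx1 g a b * dx2 h a b - dx2 g a b * dx1 h a b"

definition jacx :: "(real \<Rightarrow> real \<Rightarrow> real \<Rightarrow> real) \<Rightarrow> (real \<Rightarrow> real \<Rightarrow> real \<Rightarrow> real) \<Rightarrow> real \<Rightarrow> real \<Rightarrow> real \<Rightarrow> real" where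
  "jacx g h t = jac2 (g t) (h t)"

definition dxt1 :: "(real \<Rightarrow> real \<Rightarrow> real \<Rightarrow> real) \<Rightarrow> real \<Rightarrow> real \<Rightarrow> real \<Rightarrow> real" where
  "dxt1 g t = dx1 (g t)"

definition dxt2 :: "(real \<Rightarrow> real \<Rightarrow> real \<Rightarrow> real) \<Rightarrow> real \<Rightarrow> real \<Rightarrow> real \<Rightarrow> real" where
  "dxt2 g t = dx2 (g t)"

text \<open>Whitney's fold and cusp points of a plane map (g1,g2): R^2 -> R^2, with
  J = d(g1,g2)/d(x1,x2) and G_i = d(g_i,J)/d(x1,x2) (derivative of g_i along the
  critical curve J = 0):
  fold: J = 0, grad J /= 0, (G1,G2) /= 0;
  cusp: J = 0, grad J /= 0, G1 = G2 = 0, (d(G1,J)/d(x), d(G2,J)/d(x)) /= 0.\<close>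
definition fold_point :: "(real \<Rightarrow> real \<Rightarrow> real) \<Rightarrow> (real \<Rightarrow> real \<Rightarrow> real) \<Rightarrow> real \<times> real \<Rightarrow> bool" where
  "fold_point g1 g2 p \<longleftrightarrow> (case p of (a, b) \<Rightarrow>
     (let J = jac2 g1 g2 in
      J a b = 0 \<and> (dx1 J a b, dx2 J a b) \<noteq> (0, 0) \<and>
      (jac2 g1 J a b, jac2 g2 J a b) \<noteq> (0, 0)))"

definition cusp_point :: "(real \<Rightarrow> real \<Rightarrow> real) \<Rightarrow> (real \<Rightarrow> real \<Rightarrow> real) \<Rightarrow> real \<times> real \<Rightarrow> bool" where
  "cusp_point g1 g2 p \<longleftrightarrow> (case p of (a, b) \<Rightarrow>
     (let J = jac2 g1 g2 in
      J a b = 0 \<and> (dx1 J a b, dx2 J a b) \<noteq> (0, 0) \<and>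
      jac2 g1 J a b = 0 \<and> jac2 g2 J a b = 0 \<and>
      (jac2 (jac2 g1 J) J a b, jac2 (jac2 g2 J) J a b) \<noteq> (0, 0)))"

definition disc2 :: "real \<Rightarrow> (real \<times> real) set" where
  "disc2 r = {(a, b). a\<^sup>2 + b\<^sup>2 \<le> r\<^sup>2}"

definition tilde_disc :: "(real \<Rightarrow> real \<Rightarrow> real \<Rightarrow> real) \<Rightarrow> (real \<Rightarrow> real \<Rightarrow> real \<Rightarrow> real) \<Rightarrow>
    real \<Rightarrow> real \<Rightarrow> real \<Rightarrow> (real \<times> real) set" where
  "tilde_disc f1 f2 r0 \<delta> t = {(a, b). (f1 t a b, f2 t a b) \<in> disc2 \<delta>} \<inter> disc2 r0"

text \<open>Critical points of f_t restricted to a set S: points where the differential of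
  the plane map is not surjective, i.e. the Jacobian determinant vanishes.\<close>
definition critical_set :: "(real \<Rightarrow> real \<Rightarrow> real) \<Rightarrow> (real \<Rightarrow> real \<Rightarrow> real) \<Rightarrow> (real \<times> real) set \<Rightarrow> (real \<times> real) set" where
  "critical_set g1 g2 S = {(a, b) \<in> S. jac2 g1 g2 a b = 0}"

end

theory Submission
  imports Defs
begin

definition tenc :: "nat \<times> nat \<times> nat \<Rightarrow> nat" where
  "tenc x = (case x of (i,j,k) \<Rightarrow> prod_encode (i, prod_encode (j,k)))"
definition tdec :: "nat \<Rightarrow> nat \<times> nat \<times> nat" where
  "tdec n = (case prod_decode n of (i,m) \<Rightarrow> (i, prod_decode m))"

lemma tdec_tenc[simp]: "tdec (tenc x) = x"
  by (cases x) (auto simp: tdec_def tenc_def)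
lemma tenc_tdec[simp]: "tenc (tdec n) = n"
  by (auto simp: tdec_def tenc_def split: prod.splits) (metis prod_decode_inverse)+

lemma hs_nat:
  fixes F :: "nat \<times> nat \<times> nat \<Rightarrow> real"
  assumes "(F has_sum S) UNIV"
  shows "(\<lambda>n. F (tdec n)) sums S" "summable (\<lambda>n. \<bar>F (tdec n)\<bar>)"
proof -
  have h: "((\<lambda>n. F (tdec n)) has_sum S) UNIV"
    using assms by (subst has_sum_reindex_bij_witness[where i=tenc and j=tdec and T=UNIV and h=F and s'=S]) auto
  then show "(\<lambda>n. F (tdec n)) sums S" by (rule has_sum_imp_sums)
  from h have "(\<lambda>n. F (tdec n)) summable_on UNIV" by (rule has_sum_imp_summable)
  then have "(\<lambda>n. norm (F (tdec n))) summable_on UNIV"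
    by (simp only: summable_on_iff_abs_summable_on_real[symmetric])
  then have "summable (\<lambda>n. norm (F (tdec n)))" by (rule summable_on_imp_summable)
  then show "summable (\<lambda>n. \<bar>F (tdec n)\<bar>)" by simp
qed

lemma pow_bound:
  fixes q s :: real
  assumes "0 \<le> q" "q < s"
  shows "\<exists>C. \<forall>n x. \<bar>x\<bar> \<le> q \<longrightarrow> real n * \<bar>x\<bar>^(n-1) \<le> C * s^n"
proof -
  define q1 where "q1 = (q+s)/2"
  have q1: "0 < q1" "q \<le> q1" "q1 < s" using assms by (auto simp: q1_def)
  define h where "h = s/q1 - 1"
  have h: "h > 0" using q1 by (simp add: h_def)
  have key: "real n * q1^n \<le> s^n / h" for n
  proof -
    have "1 + real n * h \<le> (1+h)^n" by (rule Bernoulli_inequality) (use h in auto)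
    also have "1 + h = s / q1" by (simp add: h_def)
    finally have "real n * h \<le> (s/q1)^n" by simp
    then have "real n * h * q1^n \<le> (s/q1)^n * q1^n"
      using q1 by (intro mult_right_mono) auto
    also have "(s/q1)^n * q1^n = s^n" using q1 by (simp add: power_divide)
    finally have "real n * q1^n * h \<le> s^n" by (simp add: algebra_simps)
    then show ?thesis using h by (simp add: field_simps)
  qed
  show ?thesis
  proof (intro exI allI impI)
    fix n x assume x: "\<bar>x\<bar> \<le> q"
    show "real n * \<bar>x\<bar>^(n-1) \<le> (1/(h*q1)) * s^n"
    proof (cases n)
      case 0 then show ?thesis using h q1 by simp
    next
      case (Suc m)
      have "\<bar>x\<bar>^(n-1) \<le> q1^(n-1)" using x q1 by (intro power_mono) auto
      then have "real n * \<bar>x\<bar>^(n-1) \<le> real n * q1^(n-1)" by (intro mult_left_mono) auto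
      also have "real n * q1^(n-1) = real n * q1^n / q1" using Suc q1 by simp
      also have "\<dots> \<le> (s^n / h) / q1" using key[of n] q1 by (intro divide_right_mono) auto
      also have "\<dots> = (1/(h*q1)) * s^n" by simp
      finally show ?thesis .
    qed
  qed
qed

definition PS :: "real \<Rightarrow> (real \<Rightarrow> real \<Rightarrow> real) \<Rightarrow> bool" where
  "PS R g \<longleftrightarrow> (\<exists>w::nat\<Rightarrow>real. \<exists>ej ek::nat\<Rightarrow>nat. \<forall>a b. \<bar>a\<bar> < R \<and> \<bar>b\<bar> < R \<longrightarrow>
     summable (\<lambda>n. \<bar>w n * a^ej n * b^ek n\<bar>) \<and> (\<lambda>n. w n * a^ej n * b^ek n) sums g a b)"

lemma PS_swap: "PS R g \<Longrightarrow> PS R (\<lambda>a b. g b a)"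
  unfolding PS_def
proof (elim exE)
  fix w ej ek assume H: "\<forall>a b. \<bar>a\<bar> < R \<and> \<bar>b\<bar> < R \<longrightarrow>
     summable (\<lambda>n. \<bar>w n * a^ej n * b^ek n\<bar>) \<and> (\<lambda>n. w n * a^ej n * b^ek n) sums g a b"
  show "\<exists>w ej ek. \<forall>a b. \<bar>a\<bar> < R \<and> \<bar>b\<bar> < R \<longrightarrow>
     summable (\<lambda>n. \<bar>w n * a^ej n * b^ek n\<bar>) \<and> (\<lambda>n. w n * a^ej n * b^ek n) sums g b a"
    apply (rule exI[of _ w], rule exI[of _ ek], rule exI[of _ ej])
    apply (intro allI impI)
    subgoal for a b using H[rule_format, of b a] by (simp add: mult_ac)
    done
qed

lemma PS_d1:
  assumes "PS R g"
  shows "\<exists>g1. PS R g1 \<and> (\<forall>a b. \<bar>a\<bar> < R \<and> \<bar>b\<bar> < R \<longrightarrow> ((\<lambda>s. g s b) has_real_derivative g1 a b) (at a))"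
proof -
  obtain w ej ek where H0: "\<forall>a b. \<bar>a\<bar> < R \<and> \<bar>b\<bar> < R \<longrightarrow>
     summable (\<lambda>n. \<bar>w n * a^ej n * b^ek n\<bar>) \<and> (\<lambda>n. w n * a^ej n * b^ek n) sums g a b"
    using assms unfolding PS_def by blast
  have H: "summable (\<lambda>n. \<bar>w n * a^ej n * b^ek n\<bar>) \<and> (\<lambda>n. w n * a^ej n * b^ek n) sums g a b"
    if "\<bar>a\<bar> < R" "\<bar>b\<bar> < R" for a b using H0 that by blast
  define w1 where "w1 n = w n * real (ej n)" for n
  define ej1 where "ej1 n = ej n - 1" for n
  define g1 where "g1 a b = (\<Sum>n. w1 n * a^ej1 n * b^ek n)" for a b
  have bnd: "\<exists>C. \<forall>n x. \<bar>x\<bar> \<le> q \<longrightarrow> \<bar>w1 n * x^ej1 n * b^ek n\<bar> \<le> C * \<bar>w n * s^ej n * b^ek n\<bar>"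
    if qs0: "0 \<le> q" "q < s" for q s b :: real
  proof -
    obtain C where C: "\<And>n x. \<bar>x\<bar> \<le> q \<Longrightarrow> real n * \<bar>x\<bar>^(n-1) \<le> C * s^n"
      using pow_bound[OF qs0] by blast
    show ?thesis
    proof (intro exI allI impI)
      fix n x assume x: "\<bar>x\<bar> \<le> q"
      have "\<bar>w1 n * x^ej1 n * b^ek n\<bar> = \<bar>w n\<bar> * (real (ej n) * \<bar>x\<bar>^(ej n - 1)) * \<bar>b\<bar>^ek n"
        by (simp add: w1_def ej1_def abs_mult power_abs)
      also have "\<dots> \<le> \<bar>w n\<bar> * (C * s^ej n) * \<bar>b\<bar>^ek n"
        using C[OF x, of "ej n"] by (intro mult_right_mono mult_left_mono) auto
      also have "\<dots> = C * \<bar>w n * s^ej n * b^ek n\<bar>"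
        using qs0 by (simp add: abs_mult power_abs)
      finally show "\<bar>w1 n * x^ej1 n * b^ek n\<bar> \<le> C * \<bar>w n * s^ej n * b^ek n\<bar>" .
    qed
  qed
  have summ1: "summable (\<lambda>n. \<bar>w1 n * a^ej1 n * b^ek n\<bar>)" if "\<bar>a\<bar> < R" "\<bar>b\<bar> < R" for a b
  proof -
    define s where "s = (\<bar>a\<bar> + R)/2"
    have s: "\<bar>a\<bar> < s" "s < R" "\<bar>s\<bar> < R" using that by (auto simp: s_def)
    obtain C where C: "\<And>n x. \<bar>x\<bar> \<le> \<bar>a\<bar> \<Longrightarrow> \<bar>w1 n * x^ej1 n * b^ek n\<bar> \<le> C * \<bar>w n * s^ej n * b^ek n\<bar>"
      using bnd[of "\<bar>a\<bar>" s b] s by auto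
    have "summable (\<lambda>n. C * \<bar>w n * s^ej n * b^ek n\<bar>)"
      using H[OF s(3) that(2)] by (intro summable_mult) auto
    then show ?thesis by (rule summable_comparison_test'[where N=0]) (use C in auto)
  qed
  have PS1: "PS R g1" unfolding PS_def
    apply (rule exI[of _ w1], rule exI[of _ ej1], rule exI[of _ ek])
    using summ1 unfolding g1_def by (blast intro: summable_sums summable_rabs_cancel)
  have D: "((\<lambda>s. g s b) has_real_derivative g1 a b) (at a)" if ab: "\<bar>a\<bar> < R" "\<bar>b\<bar> < R" for a b
  proof -
    define d where "d = (R - \<bar>a\<bar>)/3"
    define q where "q = \<bar>a\<bar> + d"
    define s where "s = \<bar>a\<bar> + d + d"
    have d3: "d > 0" "R = \<bar>a\<bar> + 3*d" using ab unfolding d_def by (simp, simp add: field_simps)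
    have qs: "\<bar>a\<bar> < q" "0 \<le> q" "q < s" "\<bar>s\<bar> < R" "q < R" 
    proof -
      have "\<bar>a\<bar> \<ge> 0" by simp
      then have "s \<ge> 0" using d3 unfolding s_def by linarith
      then have "\<bar>s\<bar> = s" by simp
      then show "\<bar>a\<bar> < q" "0 \<le> q" "q < s" "\<bar>s\<bar> < R" "q < R" using d3 ab \<open>\<bar>a\<bar> \<ge> 0\<close> unfolding q_def s_def by linarith+
    qed
    obtain C where C: "\<And>n x. \<bar>x\<bar> \<le> q \<Longrightarrow> \<bar>w1 n * x^ej1 n * b^ek n\<bar> \<le> C * \<bar>w n * s^ej n * b^ek n\<bar>"
      using bnd[of q s b] qs by auto
    let ?S = "{-q..q}"
    have der: "((\<lambda>x. w n * x^ej n * b^ek n) has_field_derivative w1 n * x^ej1 n * b^ek n) (at x within ?S)" if "x \<in> ?S" for n x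
    proof -
      have "((\<lambda>x. w n * x^ej n * b^ek n) has_field_derivative w n * (real (ej n) * x^(ej n - 1)) * b^ek n) (at x)"
        using DERIV_pow[of "ej n" x UNIV] by (intro DERIV_cmult DERIV_cmult_right) simp
      then show ?thesis unfolding w1_def ej1_def by (simp add: has_field_derivative_at_within mult_ac)
    qed
    have uc: "uniformly_convergent_on ?S (\<lambda>n x. \<Sum>i<n. w1 i * x^ej1 i * b^ek i)"
    proof (rule Weierstrass_m_test'[where M="\<lambda>n. C * \<bar>w n * s^ej n * b^ek n\<bar>"])
      show "\<And>n x. x \<in> ?S \<Longrightarrow> norm (w1 n * x^ej1 n * b^ek n) \<le> C * \<bar>w n * s^ej n * b^ek n\<bar>"
        using C by auto
      show "summable (\<lambda>n. C * \<bar>w n * s^ej n * b^ek n\<bar>)"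
        using H[OF qs(4) ab(2)] by (intro summable_mult) auto
    qed
    have aint: "a \<in> interior ?S" using qs(1) by (simp add: abs_less_iff)
    have sa: "summable (\<lambda>n. w n * a^ej n * b^ek n)" by (rule summable_rabs_cancel) (use H[OF ab] in blast)
    have "((\<lambda>x. \<Sum>n. w n * x^ej n * b^ek n) has_field_derivative (\<Sum>n. w1 n * a^ej1 n * b^ek n)) (at a)"
    proof (rule has_field_derivative_series'(2)[OF convex_real_interval(5) der uc _ sa aint])
      show "a \<in> ?S" using aint interior_subset by blast
    qed
    then have "((\<lambda>x. \<Sum>n. w n * x^ej n * b^ek n) has_field_derivative g1 a b) (at a)"
      by (simp add: g1_def)
    then show ?thesis
    proof (rule has_field_derivative_transform_within_open[where S="{-R<..<R}"])
      show "a \<in> {-R<..<R}" using ab by auto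
      show "open {-R<..<R}" by simp
      fix x assume "x \<in> {-R<..<R}"
      then have "\<bar>x\<bar> < R" by auto
      then show "(\<Sum>n. w n * x^ej n * b^ek n) = g x b"
        using H[OF _ ab(2)] sums_unique by metis
    qed
  qed
  show ?thesis using PS1 D by blast
qed

lemma PS_d2:
  assumes "PS R g"
  shows "\<exists>g2. PS R g2 \<and> (\<forall>a b. \<bar>a\<bar> < R \<and> \<bar>b\<bar> < R \<longrightarrow> ((\<lambda>s. g a s) has_real_derivative g2 a b) (at b))"
proof -
  obtain g1 where g1: "PS R g1" "\<And>a b. \<bar>a\<bar> < R \<and> \<bar>b\<bar> < R \<Longrightarrow> ((\<lambda>s. g a s) has_real_derivative g1 b a) (at b)"
    using PS_d1[OF PS_swap[OF assms]] by blast
  show ?thesis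
    by (rule exI[of _ "\<lambda>a b. g1 b a"]) (use g1 PS_swap[OF g1(1)] in auto)
qed

definition box2 :: "real \<Rightarrow> (real \<times> real) set" where
  "box2 R = {p. \<bar>fst p\<bar> < R \<and> \<bar>snd p\<bar> < R}"

lemma open_box2: "open (box2 R)"
  unfolding box2_def
  by (intro open_Collect_conj open_Collect_less continuous_intros)

lemma PS_cont_closed:
  assumes "PS R g" "0 \<le> s" "s < R"
  shows "continuous_on {p. \<bar>fst p\<bar> \<le> s \<and> \<bar>snd p\<bar> \<le> s} (\<lambda>p. g (fst p) (snd p))"
proof -
  obtain w ej ek where H0: "\<forall>a b. \<bar>a\<bar> < R \<and> \<bar>b\<bar> < R \<longrightarrow>
     summable (\<lambda>n. \<bar>w n * a^ej n * b^ek n\<bar>) \<and> (\<lambda>n. w n * a^ej n * b^ek n) sums g a b"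
    using assms unfolding PS_def by blast
  have H: "summable (\<lambda>n. \<bar>w n * a^ej n * b^ek n\<bar>) \<and> (\<lambda>n. w n * a^ej n * b^ek n) sums g a b"
    if "\<bar>a\<bar> < R" "\<bar>b\<bar> < R" for a b using H0 that by blast
  let ?C = "{p::real\<times>real. \<bar>fst p\<bar> \<le> s \<and> \<bar>snd p\<bar> \<le> s}"
  let ?u = "\<lambda>n (p::real\<times>real). w n * fst p^ej n * snd p^ek n"
  have sR: "\<bar>s\<bar> < R" using assms by simp
  have ul: "uniform_limit ?C (\<lambda>n p. \<Sum>i<n. ?u i p) (\<lambda>p. suminf (\<lambda>i. ?u i p)) sequentially"
  proof (rule Weierstrass_m_test[where M="\<lambda>n. \<bar>w n * s^ej n * s^ek n\<bar>"])
    fix n and p :: "real \<times> real" assume p: "p \<in> ?C"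
    have "\<bar>fst p\<bar>^ej n \<le> s^ej n" using p by (intro power_mono) auto
    moreover have "\<bar>snd p\<bar>^ek n \<le> s^ek n" using p by (intro power_mono) auto
    ultimately have "\<bar>w n\<bar> * \<bar>fst p\<bar>^ej n * \<bar>snd p\<bar>^ek n \<le> \<bar>w n\<bar> * s^ej n * s^ek n"
      using assms(2) by (intro mult_mono mult_left_mono) auto
    then show "norm (?u n p) \<le> \<bar>w n * s^ej n * s^ek n\<bar>"
      using assms(2) by (simp add: abs_mult power_abs)
  next
    show "summable (\<lambda>n. \<bar>w n * s^ej n * s^ek n\<bar>)" using H[OF sR sR] by blast
  qed
  have "continuous_on ?C (\<lambda>p. suminf (\<lambda>i. ?u i p))"
    by (rule uniform_limit_theorem[OF _ ul]) (auto intro!: always_eventually continuous_intros)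
  then show ?thesis
  proof (rule continuous_on_cong[THEN iffD1, rotated 2])
    fix p :: "real \<times> real" assume p: "p \<in> ?C"
    then have "\<bar>fst p\<bar> < R" "\<bar>snd p\<bar> < R" using assms by auto
    then show "suminf (\<lambda>i. ?u i p) = g (fst p) (snd p)" using H sums_unique by metis
  qed auto
qed

lemma PS_cont:
  assumes "PS R g"
  shows "continuous_on (box2 R) (\<lambda>p. g (fst p) (snd p))"
proof (rule continuous_at_imp_continuous_on, rule ballI)
  fix p assume p: "p \<in> box2 R"
  define s where "s = (max \<bar>fst p\<bar> \<bar>snd p\<bar> + R)/2"
  have s: "0 \<le> s" "s < R" "p \<in> box2 s" using p by (auto simp: s_def box2_def)
  have "continuous_on (box2 s) (\<lambda>p. g (fst p) (snd p))"
    by (rule continuous_on_subset[OF PS_cont_closed[OF assms s(1,2)]]) (auto simp: box2_def)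
  then show "isCont (\<lambda>p. g (fst p) (snd p)) p"
    using continuous_on_eq_continuous_at[OF open_box2] s(3) by blast
qed

fun CK :: "nat \<Rightarrow> real \<Rightarrow> (real \<Rightarrow> real \<Rightarrow> real) \<Rightarrow> bool" where
  "CK 0 R g = continuous_on (box2 R) (\<lambda>p. g (fst p) (snd p))"
| "CK (Suc k) R g = (CK 0 R g \<and> CK k R (dx1 g) \<and> CK k R (dx2 g) \<and>
     (\<forall>a b. \<bar>a\<bar> < R \<and> \<bar>b\<bar> < R \<longrightarrow> ((\<lambda>s. g s b) has_real_derivative dx1 g a b) (at a) \<and>
        ((\<lambda>s. g a s) has_real_derivative dx2 g a b) (at b)))"

lemma dx1_loc:
  assumes eq: "\<And>a b. \<bar>a\<bar> < R \<Longrightarrow> \<bar>b\<bar> < R \<Longrightarrow> g a b = h a b"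
    and ab: "\<bar>a\<bar> < R" "\<bar>b\<bar> < R"
    and d: "((\<lambda>s. g s b) has_real_derivative D) (at a)"
  shows "((\<lambda>s. h s b) has_real_derivative D) (at a)" "dx1 h a b = D"
proof -
  show 1: "((\<lambda>s. h s b) has_real_derivative D) (at a)"
  proof (rule has_field_derivative_transform_within_open[OF d, where S="{-R<..<R}"])
    show "a \<in> {-R<..<R}" using ab by (auto simp: abs_less_iff)
  qed (use eq ab in \<open>auto simp: abs_less_iff\<close>)
  show "dx1 h a b = D" unfolding dx1_def using 1 by (rule DERIV_imp_deriv)
qed

lemma dx2_loc:
  assumes eq: "\<And>a b. \<bar>a\<bar> < R \<Longrightarrow> \<bar>b\<bar> < R \<Longrightarrow> g a b = h a b"
    and ab: "\<bar>a\<bar> < R" "\<bar>b\<bar> < R"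
    and d: "((\<lambda>s. g a s) has_real_derivative D) (at b)"
  shows "((\<lambda>s. h a s) has_real_derivative D) (at b)" "dx2 h a b = D"
proof -
  show 1: "((\<lambda>s. h a s) has_real_derivative D) (at b)"
  proof (rule has_field_derivative_transform_within_open[OF d, where S="{-R<..<R}"])
    show "b \<in> {-R<..<R}" using ab by (auto simp: abs_less_iff)
  qed (use eq ab in \<open>auto simp: abs_less_iff\<close>)
  show "dx2 h a b = D" unfolding dx2_def using 1 by (rule DERIV_imp_deriv)
qed

lemma CK0_cong:
  "CK 0 R g \<Longrightarrow> (\<And>a b. \<bar>a\<bar> < R \<Longrightarrow> \<bar>b\<bar> < R \<Longrightarrow> g a b = h a b) \<Longrightarrow> CK 0 R h"
proof -
  assume c: "CK 0 R g" and eq: "\<And>a b. \<bar>a\<bar> < R \<Longrightarrow> \<bar>b\<bar> < R \<Longrightarrow> g a b = h a b"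
  have "continuous_on (box2 R) (\<lambda>p. g (fst p) (snd p)) = continuous_on (box2 R) (\<lambda>p. h (fst p) (snd p))"
  proof (rule continuous_on_cong)
    fix p assume "p \<in> box2 R"
    then show "g (fst p) (snd p) = h (fst p) (snd p)" using eq unfolding box2_def by blast
  qed simp
  then show ?thesis using c by simp
qed

lemma CK_cong:
  "CK k R g \<Longrightarrow> (\<And>a b. \<bar>a\<bar> < R \<Longrightarrow> \<bar>b\<bar> < R \<Longrightarrow> g a b = h a b) \<Longrightarrow> CK k R h"
proof (induction k arbitrary: g h)
  case 0
  then show ?case using CK0_cong by blast
next
  case (Suc k)
  have eq: "\<And>a b. \<bar>a\<bar> < R \<Longrightarrow> \<bar>b\<bar> < R \<Longrightarrow> g a b = h a b" by (rule Suc.prems(2))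
  note all = Suc.prems(1)[unfolded CK.simps(2)]
  from all have c0: "CK 0 R g" and c1: "CK k R (dx1 g)" and c2: "CK k R (dx2 g)"
    and d0: "\<forall>a b. \<bar>a\<bar> < R \<and> \<bar>b\<bar> < R \<longrightarrow> ((\<lambda>s. g s b) has_real_derivative dx1 g a b) (at a) \<and>
        ((\<lambda>s. g a s) has_real_derivative dx2 g a b) (at b)" by blast+
  have d1: "((\<lambda>s. g s b) has_real_derivative dx1 g a b) (at a)"
    and d2: "((\<lambda>s. g a s) has_real_derivative dx2 g a b) (at b)"
    if "\<bar>a\<bar> < R" "\<bar>b\<bar> < R" for a b using d0 that by blast+
  have e1: "dx1 h a b = dx1 g a b" if "\<bar>a\<bar> < R" "\<bar>b\<bar> < R" for a b
    by (rule dx1_loc(2)[where g=g and h=h, OF eq that d1[OF that]])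
  have e2: "dx2 h a b = dx2 g a b" if "\<bar>a\<bar> < R" "\<bar>b\<bar> < R" for a b
    by (rule dx2_loc(2)[where g=g and h=h, OF eq that d2[OF that]])
  have h0: "CK 0 R h" using CK0_cong[OF c0 eq] .
  have h1: "CK k R (dx1 h)" by (rule Suc.IH[OF c1]) (simp add: e1)
  have h2: "CK k R (dx2 h)" by (rule Suc.IH[OF c2]) (simp add: e2)
  have h3: "((\<lambda>s. h s b) has_real_derivative dx1 h a b) (at a) \<and>
        ((\<lambda>s. h a s) has_real_derivative dx2 h a b) (at b)" if "\<bar>a\<bar> < R" "\<bar>b\<bar> < R" for a b
    using dx1_loc(1)[where g=g and h=h, OF eq that d1[OF that]] dx2_loc(1)[where g=g and h=h, OF eq that d2[OF that]] e1[OF that] e2[OF that]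
    by simp
  show ?case unfolding CK.simps(2) using h0 h1 h2 h3 by blast
qed

lemma CK_SucD:
  assumes "CK (Suc k) R g"
  shows "CK 0 R g" "CK k R (dx1 g)" "CK k R (dx2 g)"
    "\<And>a b. \<bar>a\<bar> < R \<Longrightarrow> \<bar>b\<bar> < R \<Longrightarrow> ((\<lambda>s. g s b) has_real_derivative dx1 g a b) (at a)"
    "\<And>a b. \<bar>a\<bar> < R \<Longrightarrow> \<bar>b\<bar> < R \<Longrightarrow> ((\<lambda>s. g a s) has_real_derivative dx2 g a b) (at b)"
  using assms[unfolded CK.simps(2)] by blast+

lemma CK_SucI:
  assumes c0: "CK 0 R g"
    and d1: "\<And>a b. \<bar>a\<bar> < R \<Longrightarrow> \<bar>b\<bar> < R \<Longrightarrow> ((\<lambda>s. g s b) has_real_derivative GA a b) (at a)"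
    and d2: "\<And>a b. \<bar>a\<bar> < R \<Longrightarrow> \<bar>b\<bar> < R \<Longrightarrow> ((\<lambda>s. g a s) has_real_derivative GB a b) (at b)"
    and c1: "CK k R GA" and c2: "CK k R GB"
  shows "CK (Suc k) R g"
proof -
  have e1: "GA a b = dx1 g a b" if "\<bar>a\<bar> < R" "\<bar>b\<bar> < R" for a b
    unfolding dx1_def using d1[OF that] by (rule DERIV_imp_deriv[symmetric])
  have e2: "GB a b = dx2 g a b" if "\<bar>a\<bar> < R" "\<bar>b\<bar> < R" for a b
    unfolding dx2_def using d2[OF that] by (rule DERIV_imp_deriv[symmetric])
  have h1: "CK k R (dx1 g)" by (rule CK_cong[OF c1]) (rule e1)
  have h2: "CK k R (dx2 g)" by (rule CK_cong[OF c2]) (rule e2)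
  have h3: "((\<lambda>s. g s b) has_real_derivative dx1 g a b) (at a) \<and>
        ((\<lambda>s. g a s) has_real_derivative dx2 g a b) (at b)" if "\<bar>a\<bar> < R" "\<bar>b\<bar> < R" for a b
    using d1[OF that] d2[OF that] unfolding e1[OF that] e2[OF that] by blast
  show ?thesis unfolding CK.simps(2) using c0 h1 h2 h3 by blast
qed

lemma CK_mono: "CK (Suc k) R g \<Longrightarrow> CK k R g"
proof (induction k arbitrary: g)
  case 0
  then show ?case using CK_SucD(1) by blast
next
  case (Suc k)
  note D = CK_SucD[OF Suc.prems]
  show ?case
  proof (rule CK_SucI[where GA="dx1 g" and GB="dx2 g"])
    show "CK 0 R g" by (rule D(1))
    show "CK k R (dx1 g)" by (rule Suc.IH, rule D(2))
    show "CK k R (dx2 g)" by (rule Suc.IH, rule D(3))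
  qed (fact D(4), fact D(5))
qed

lemma CK_add: "CK k R g \<Longrightarrow> CK k R h \<Longrightarrow> CK k R (\<lambda>a b. g a b + h a b)"
proof (induction k arbitrary: g h)
  case 0
  then show ?case by (simp only: CK.simps(1)) (rule continuous_on_add)
next
  case (Suc k)
  note G = CK_SucD[OF Suc.prems(1)] and H = CK_SucD[OF Suc.prems(2)]
  show ?case
  proof (rule CK_SucI[where GA="\<lambda>a b. dx1 g a b + dx1 h a b" and GB="\<lambda>a b. dx2 g a b + dx2 h a b"])
    show "CK 0 R (\<lambda>a b. g a b + h a b)" using G(1) H(1) by (simp only: CK.simps(1)) (rule continuous_on_add)
    show "((\<lambda>s. g s b + h s b) has_real_derivative dx1 g a b + dx1 h a b) (at a)"
      if "\<bar>a\<bar> < R" "\<bar>b\<bar> < R" for a b using G(4)[OF that] H(4)[OF that] by (rule DERIV_add)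
    show "((\<lambda>s. g a s + h a s) has_real_derivative dx2 g a b + dx2 h a b) (at b)"
      if "\<bar>a\<bar> < R" "\<bar>b\<bar> < R" for a b using G(5)[OF that] H(5)[OF that] by (rule DERIV_add)
    show "CK k R (\<lambda>a b. dx1 g a b + dx1 h a b)" using Suc.IH[OF G(2) H(2)] .
    show "CK k R (\<lambda>a b. dx2 g a b + dx2 h a b)" using Suc.IH[OF G(3) H(3)] .
  qed
qed

lemma CK_neg: "CK k R g \<Longrightarrow> CK k R (\<lambda>a b. - g a b)"
proof (induction k arbitrary: g)
  case 0
  then show ?case by (simp only: CK.simps(1)) (rule continuous_on_minus)
next
  case (Suc k)
  note G = CK_SucD[OF Suc.prems(1)]
  show ?case
  proof (rule CK_SucI[where GA="\<lambda>a b. - dx1 g a b" and GB="\<lambda>a b. - dx2 g a b"])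
    show "CK 0 R (\<lambda>a b. - g a b)" using G(1) by (simp only: CK.simps(1)) (rule continuous_on_minus)
    show "((\<lambda>s. - g s b) has_real_derivative - dx1 g a b) (at a)"
      if "\<bar>a\<bar> < R" "\<bar>b\<bar> < R" for a b using G(4)[OF that] by (rule DERIV_minus)
    show "((\<lambda>s. - g a s) has_real_derivative - dx2 g a b) (at b)"
      if "\<bar>a\<bar> < R" "\<bar>b\<bar> < R" for a b using G(5)[OF that] by (rule DERIV_minus)
    show "CK k R (\<lambda>a b. - dx1 g a b)" using Suc.IH[OF G(2)] .
    show "CK k R (\<lambda>a b. - dx2 g a b)" using Suc.IH[OF G(3)] .
  qed
qed

lemma CK_diff: "CK k R g \<Longrightarrow> CK k R h \<Longrightarrow> CK k R (\<lambda>a b. g a b - h a b)"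
  using CK_add[OF _ CK_neg[of k R h], of g] by simp

lemma CK_mult: "CK k R g \<Longrightarrow> CK k R h \<Longrightarrow> CK k R (\<lambda>a b. g a b * h a b)"
proof (induction k arbitrary: g h)
  case 0
  then show ?case by (simp only: CK.simps(1)) (rule continuous_on_mult)
next
  case (Suc k)
  note G = CK_SucD[OF Suc.prems(1)] and H = CK_SucD[OF Suc.prems(2)]
  have gk: "CK k R g" and hk: "CK k R h" using CK_mono Suc.prems by blast+
  show ?case
  proof (rule CK_SucI[where GA="\<lambda>a b. g a b * dx1 h a b + dx1 g a b * h a b"
                        and GB="\<lambda>a b. g a b * dx2 h a b + dx2 g a b * h a b"])
    show "CK 0 R (\<lambda>a b. g a b * h a b)" using G(1) H(1) by (simp only: CK.simps(1)) (rule continuous_on_mult)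
    show "((\<lambda>s. g s b * h s b) has_real_derivative g a b * dx1 h a b + dx1 g a b * h a b) (at a)"
      if "\<bar>a\<bar> < R" "\<bar>b\<bar> < R" for a b using G(4)[OF that] H(4)[OF that] by (rule DERIV_mult')
    show "((\<lambda>s. g a s * h a s) has_real_derivative g a b * dx2 h a b + dx2 g a b * h a b) (at b)"
      if "\<bar>a\<bar> < R" "\<bar>b\<bar> < R" for a b using G(5)[OF that] H(5)[OF that] by (rule DERIV_mult')
    show "CK k R (\<lambda>a b. g a b * dx1 h a b + dx1 g a b * h a b)"
      by (rule CK_add) (rule Suc.IH; fact)+
    show "CK k R (\<lambda>a b. g a b * dx2 h a b + dx2 g a b * h a b)"
      by (rule CK_add) (rule Suc.IH; fact)+
  qed
qed

lemma CK_jac2: "CK (Suc k) R g \<Longrightarrow> CK (Suc k) R h \<Longrightarrow> CK k R (jac2 g h)"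
proof -
  assume g: "CK (Suc k) R g" and h: "CK (Suc k) R h"
  have "jac2 g h = (\<lambda>a b. dx1 g a b * dx2 h a b - dx2 g a b * dx1 h a b)"
    by (intro ext) (simp add: jac2_def)
  moreover have "CK k R (\<lambda>a b. dx1 g a b * dx2 h a b - dx2 g a b * dx1 h a b)"
    using CK_SucD(2,3)[OF g] CK_SucD(2,3)[OF h] by (intro CK_diff CK_mult)
  ultimately show ?thesis by simp
qed

lemma CK_PS: "PS R g \<Longrightarrow> CK k R g"
proof (induction k arbitrary: g)
  case 0
  then show ?case using PS_cont by simp
next
  case (Suc k)
  obtain g1 where g1: "PS R g1" "\<And>a b. \<bar>a\<bar> < R \<and> \<bar>b\<bar> < R \<Longrightarrow> ((\<lambda>s. g s b) has_real_derivative g1 a b) (at a)"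
    using PS_d1[OF Suc.prems] by blast
  obtain g2 where g2: "PS R g2" "\<And>a b. \<bar>a\<bar> < R \<and> \<bar>b\<bar> < R \<Longrightarrow> ((\<lambda>s. g a s) has_real_derivative g2 a b) (at b)"
    using PS_d2[OF Suc.prems] by blast
  show ?case
  proof (rule CK_SucI[where GA=g1 and GB=g2])
    show "CK 0 R g" using PS_cont[OF Suc.prems] by (simp only: CK.simps(1))
    show "CK k R g1" by (rule Suc.IH[OF g1(1)])
    show "CK k R g2" by (rule Suc.IH[OF g2(1)])
  qed (use g1(2) g2(2) in blast)+
qed

lemma CK_0: "CK k R g \<Longrightarrow> CK 0 R g"
  by (induction k) (auto dest: CK_mono)

lemma box2_eq: "{-R<..<R} \<times> {-R<..<R} = box2 R"
  by (auto simp: box2_def abs_less_iff)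

lemma CK_frechet:
  assumes g: "CK (Suc k) R g" and ab: "\<bar>a\<bar> < R" "\<bar>b\<bar> < R"
  shows "((\<lambda>p. g (fst p) (snd p)) has_derivative (\<lambda>h. dx1 g a b * fst h + dx2 g a b * snd h)) (at (a,b))"
proof -
  note G = CK_SucD[OF g]
  let ?X = "{-R<..<R}"
  have c2: "continuous_on (box2 R) (\<lambda>p. dx2 g (fst p) (snd p))"
    using CK_0[OF G(3)] by (simp only: CK.simps(1))
  have c2': "continuous_on (box2 R) (\<lambda>p. blinfun_mult_right (dx2 g (fst p) (snd p)))"
    by (rule bounded_linear.continuous_on[OF bounded_linear_blinfun_mult_right c2])
  have abX: "(a,b) \<in> box2 R" using ab by (simp add: box2_def)
  have cont: "continuous (at (a, b) within ?X \<times> ?X) (\<lambda>(x, y). blinfun_mult_right (dx2 g x y))"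
  proof -
    have "isCont (\<lambda>p. blinfun_mult_right (dx2 g (fst p) (snd p))) (a,b)"
      using c2' abX continuous_on_eq_continuous_at[OF open_box2] by blast
    then show ?thesis by (simp add: split_beta' continuous_at_imp_continuous_within)
  qed
  have fx: "((\<lambda>x. g x b) has_derivative (\<lambda>h. dx1 g a b * h)) (at a within ?X)"
    using G(4)[OF ab] unfolding has_field_derivative_def by (rule has_derivative_at_withinI)
  have fy: "((\<lambda>y. g x y) has_derivative blinfun_apply (blinfun_mult_right (dx2 g x y))) (at y within ?X)"
    if "x \<in> ?X" "y \<in> ?X" for x y
  proof -
    have "\<bar>x\<bar> < R" "\<bar>y\<bar> < R" using that by (auto simp: abs_less_iff)
    then have "((\<lambda>y. g x y) has_derivative (\<lambda>h. dx2 g x y * h)) (at y)"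
      using G(5) unfolding has_field_derivative_def by blast
    then show ?thesis by (simp add: has_derivative_at_withinI)
  qed
  have "((\<lambda>(x, y). g x y) has_derivative (\<lambda>(tx, ty). dx1 g a b * tx + blinfun_apply (blinfun_mult_right (dx2 g a b)) ty))
      (at (a, b) within ?X \<times> ?X)"
    by (rule has_derivative_partialsI[OF fx fy cont]) (use ab in \<open>auto simp: abs_less_iff\<close>)
  then have "((\<lambda>(x, y). g x y) has_derivative (\<lambda>(tx, ty). dx1 g a b * tx + dx2 g a b * ty)) (at (a, b))"
    using at_within_open[OF abX open_box2] by (simp add: box2_eq)
  then show ?thesis by (simp add: split_beta')
qed

lemma inj_lin2:
  fixes a b c d :: real
  assumes "a*d - b*c \<noteq> 0"
  shows "inj (\<lambda>h::real\<times>real. (a* fst h + b* snd h, c* fst h + d* snd h))"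
proof (rule injI)
  fix h h' :: "real \<times> real"
  assume "(a* fst h + b* snd h, c* fst h + d* snd h) = (a* fst h' + b* snd h', c* fst h' + d* snd h')"
  then have e1: "a* fst h + b* snd h = a* fst h' + b* snd h'" and e2: "c* fst h + d* snd h = c* fst h' + d* snd h'"
    by auto
  have "(a*d - b*c) * (fst h - fst h') = d*(a* fst h + b* snd h - (a* fst h' + b* snd h')) - b*(c* fst h + d* snd h - (c* fst h' + d* snd h'))"
    by (simp add: algebra_simps)
  also have "\<dots> = 0" using e1 e2 by simp
  finally have 1: "fst h = fst h'" using assms by simp
  have "(a*d - b*c) * (snd h - snd h') = a*(c* fst h + d* snd h - (c* fst h' + d* snd h')) - c*(a* fst h + b* snd h - (a* fst h' + b* snd h'))"
    by (simp add: algebra_simps)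
  also have "\<dots> = 0" using e1 e2 by simp
  finally have 2: "snd h = snd h'" using assms by simp
  show "h = h'" using 1 2 by (simp add: prod_eq_iff)
qed

lemma isolated_by_deriv:
  fixes \<Phi> :: "real \<times> real \<Rightarrow> real \<times> real"
  assumes d: "(\<Phi> has_derivative L) (at q)" and i: "inj L"
  shows "\<exists>e>0. \<forall>p. p \<noteq> q \<and> dist p q < e \<longrightarrow> \<Phi> p \<noteq> \<Phi> q"
proof -
  have bl: "bounded_linear L" using d by (rule has_derivative_bounded_linear)
  then have "linear L" by (rule bounded_linear.linear)
  then obtain B where B: "B > 0" "\<And>x. B * norm x \<le> norm (L x)"
    using linear_inj_bounded_below_pos[OF _ i] by blast
  from d have ALL: "\<forall>e>0. \<exists>d>0. \<forall>y. norm (y - q) < d \<longrightarrow> norm (\<Phi> y - \<Phi> q - L (y - q)) \<le> e * norm (y - q)"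
    unfolding has_derivative_at_alt by blast
  then obtain e where e: "e > 0" "\<And>y. norm (y - q) < e \<Longrightarrow> norm (\<Phi> y - \<Phi> q - L (y - q)) \<le> B/2 * norm (y - q)"
    using ALL[rule_format, of "B/2"] B(1) by auto
  show ?thesis
  proof (intro exI[of _ e] conjI allI impI)
    show "e > 0" by (rule e(1))
    fix p assume p: "p \<noteq> q \<and> dist p q < e"
    then have n: "norm (p - q) < e" "norm (p - q) > 0" by (auto simp: dist_norm)
    have 1: "norm (\<Phi> p - \<Phi> q - L (p - q)) \<le> B/2 * norm (p - q)" using e(2)[OF n(1)] .
    have 2: "B * norm (p - q) \<le> norm (L (p - q))" by (rule B(2))
    have "norm (L (p - q)) \<le> norm (\<Phi> p - \<Phi> q) + norm (\<Phi> p - \<Phi> q - L (p - q))"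
    proof -
      have "L (p - q) = (\<Phi> p - \<Phi> q) - (\<Phi> p - \<Phi> q - L (p - q))" by simp
      then show ?thesis by (metis norm_triangle_ineq4)
    qed
    then have "norm (\<Phi> p - \<Phi> q) \<ge> B/2 * norm (p - q)" using 1 2 by linarith
    moreover have "B/2 * norm (p - q) > 0" using B(1) n(2) by simp
    ultimately show "\<Phi> p \<noteq> \<Phi> q" by auto
  qed
qed

lemma tri_split: "(\<lambda>(i::nat, j::nat, k::nat). P i j k) = (\<lambda>x. P (fst x) (fst (snd x)) (snd (snd x)))"
  by (simp add: fun_eq_iff split_beta)

lemma analytic_atD:
  assumes "analytic_at (t0, a0, b0) g"
  obtains r c where "r > 0" "\<And>t a b. \<bar>t - t0\<bar> < r \<Longrightarrow> \<bar>a - a0\<bar> < r \<Longrightarrow> \<bar>b - b0\<bar> < r \<Longrightarrow>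
      ((\<lambda>x. c x * (t - t0) ^ fst x * (a - a0) ^ fst (snd x) * (b - b0) ^ snd (snd x)) has_sum g t a b) UNIV"
proof -
  from assms obtain r c where r: "r > 0" and H: "\<forall>t a b. \<bar>t - t0\<bar> < r \<and> \<bar>a - a0\<bar> < r \<and> \<bar>b - b0\<bar> < r \<longrightarrow>
          ((\<lambda>(i, j, k). c (i, j, k) * (t - t0) ^ i * (a - a0) ^ j * (b - b0) ^ k) has_sum g t a b) UNIV"
    unfolding analytic_at_def by auto
  show ?thesis
  proof (rule that[OF r])
    fix t a b assume "\<bar>t - t0\<bar> < r" "\<bar>a - a0\<bar> < r" "\<bar>b - b0\<bar> < r"
    then have "((\<lambda>(i, j, k). c (i, j, k) * (t - t0) ^ i * (a - a0) ^ j * (b - b0) ^ k) has_sum g t a b) UNIV"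
      using H by blast
    then show "((\<lambda>x. c x * (t - t0) ^ fst x * (a - a0) ^ fst (snd x) * (b - b0) ^ snd (snd x)) has_sum g t a b) UNIV"
      by (simp only: tri_split prod.collapse)
  qed
qed

lemma analytic0_PS:
  assumes "analytic0 g"
  shows "\<exists>r>0. \<forall>t. \<bar>t\<bar> < r \<longrightarrow> PS r (g t)"
proof -
  obtain r c where r: "r > 0" and H: "\<And>t a b. \<bar>t - 0\<bar> < r \<Longrightarrow> \<bar>a - 0\<bar> < r \<Longrightarrow> \<bar>b - 0\<bar> < r \<Longrightarrow>
      ((\<lambda>x. c x * (t - 0) ^ fst x * (a - 0) ^ fst (snd x) * (b - 0) ^ snd (snd x)) has_sum g t a b) UNIV"
    using analytic_atD[of 0 0 0 g] assms unfolding analytic0_def by blast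
  have "PS r (g t)" if t: "\<bar>t\<bar> < r" for t
  proof -
    define w where "w n = c (tdec n) * t ^ fst (tdec n)" for n
    define ej where "ej n = fst (snd (tdec n))" for n
    define ek where "ek n = snd (snd (tdec n))" for n
    have "summable (\<lambda>n. \<bar>w n * a ^ ej n * b ^ ek n\<bar>) \<and> (\<lambda>n. w n * a ^ ej n * b ^ ek n) sums g t a b"
      if ab: "\<bar>a\<bar> < r" "\<bar>b\<bar> < r" for a b
    proof -
      have hs: "((\<lambda>x. c x * t ^ fst x * a ^ fst (snd x) * b ^ snd (snd x)) has_sum g t a b) UNIV"
        using H[of t a b] t ab by simp
      note N = hs_nat[OF hs]
      then show ?thesis unfolding w_def ej_def ek_def by simp
    qed
    then show ?thesis unfolding PS_def by blast
  qed
  then show ?thesis using r by blast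
qed

lemma analytic_at_cont:
  assumes "analytic_at (t0, a0, b0) g"
  shows "isCont (\<lambda>p. g (fst p) (fst (snd p)) (snd (snd p))) (t0, a0, b0)"
proof -
  obtain r c where r: "r > 0" and H: "\<And>t a b. \<bar>t - t0\<bar> < r \<Longrightarrow> \<bar>a - a0\<bar> < r \<Longrightarrow> \<bar>b - b0\<bar> < r \<Longrightarrow>
      ((\<lambda>x. c x * (t - t0) ^ fst x * (a - a0) ^ fst (snd x) * (b - b0) ^ snd (snd x)) has_sum g t a b) UNIV"
    using analytic_atD[OF assms] by blast
  define s where "s = r/2"
  have s: "0 < s" "s < r" using r by (auto simp: s_def)
  let ?C = "{p::real\<times>real\<times>real. \<bar>fst p - t0\<bar> \<le> s \<and> \<bar>fst (snd p) - a0\<bar> \<le> s \<and> \<bar>snd (snd p) - b0\<bar> \<le> s}"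
  let ?O = "{p::real\<times>real\<times>real. \<bar>fst p - t0\<bar> < s \<and> \<bar>fst (snd p) - a0\<bar> < s \<and> \<bar>snd (snd p) - b0\<bar> < s}"
  define F where "F p x = c x * (fst p - t0) ^ fst x * (fst (snd p) - a0) ^ fst (snd x) * (snd (snd p) - b0) ^ snd (snd x)"
    for p :: "real\<times>real\<times>real" and x :: "nat\<times>nat\<times>nat"
  let ?u = "\<lambda>n p. F p (tdec n)"
  define P where "P = (t0 + s, a0 + s, b0 + s)"
  have hsP: "(F P has_sum g (fst P) (fst (snd P)) (snd (snd P))) UNIV"
    unfolding F_def using H[of "t0+s" "a0+s" "b0+s"] s by (simp add: P_def)
  have ul: "uniform_limit ?C (\<lambda>n p. \<Sum>i<n. ?u i p) (\<lambda>p. suminf (\<lambda>i. ?u i p)) sequentially"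
  proof (rule Weierstrass_m_test[where M="\<lambda>n. \<bar>F P (tdec n)\<bar>"])
    fix n and p :: "real\<times>real\<times>real" assume p: "p \<in> ?C"
    obtain i j k where x: "tdec n = (i,j,k)" by (metis prod_cases3)
    have 1: "\<bar>fst p - t0\<bar>^i \<le> s^i" using p by (intro power_mono) auto
    have 2: "\<bar>fst (snd p) - a0\<bar>^j \<le> s^j" using p by (intro power_mono) auto
    have 3: "\<bar>snd (snd p) - b0\<bar>^k \<le> s^k" using p by (intro power_mono) auto
    have "\<bar>c (i,j,k)\<bar> * \<bar>fst p - t0\<bar>^i * \<bar>fst (snd p) - a0\<bar>^j * \<bar>snd (snd p) - b0\<bar>^k
        \<le> \<bar>c (i,j,k)\<bar> * s^i * s^j * s^k"
      using 1 2 3 s by (intro mult_mono mult_left_mono) auto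
    then show "norm (?u n p) \<le> \<bar>F P (tdec n)\<bar>"
      using s by (simp add: F_def P_def x abs_mult power_abs)
  next
    show "summable (\<lambda>n. \<bar>F P (tdec n)\<bar>)" by (rule hs_nat(2)[OF hsP])
  qed
  have "continuous_on ?C (\<lambda>p. suminf (\<lambda>i. ?u i p))"
    by (rule uniform_limit_theorem[OF _ ul]) (auto intro!: always_eventually continuous_intros simp: F_def)
  then have c1: "continuous_on ?O (\<lambda>p. suminf (\<lambda>i. ?u i p))"
    by (rule continuous_on_subset) auto
  have eqO: "suminf (\<lambda>i. ?u i p) = g (fst p) (fst (snd p)) (snd (snd p))" if "p \<in> ?O" for p
  proof -
    have "(F p has_sum g (fst p) (fst (snd p)) (snd (snd p))) UNIV"
      unfolding F_def using H[of "fst p" "fst (snd p)" "snd (snd p)"] that s by auto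
    then show ?thesis using hs_nat(1) sums_unique by metis
  qed
  have c2: "continuous_on ?O (\<lambda>p. g (fst p) (fst (snd p)) (snd (snd p)))"
  proof -
    have "continuous_on ?O (\<lambda>p. suminf (\<lambda>i. ?u i p)) = continuous_on ?O (\<lambda>p. g (fst p) (fst (snd p)) (snd (snd p)))"
      by (rule continuous_on_cong) (use eqO in auto)
    then show ?thesis using c1 by simp
  qed
  have oO: "open ?O"
    by (intro open_Collect_conj open_Collect_less continuous_intros)
  have "(t0, a0, b0) \<in> ?O" using s by simp
  then show ?thesis using c2 oO continuous_on_eq_continuous_at by blast
qed

lemma jac2_grad0:
  assumes "dx1 J a b = 0" "dx2 J a b = 0"
  shows "jac2 X J a b = 0"
  using assms by (simp add: jac2_def)

lemma alg_point:
  fixes g1 g2 :: "real \<Rightarrow> real \<Rightarrow> real"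
  assumes J0: "jac2 g1 g2 a b = 0"
    and nz: "\<not> (jac2 g1 (jac2 g1 g2) a b = 0 \<and> jac2 g2 (jac2 g1 g2) a b = 0 \<and>
              jac2 (jac2 g1 (jac2 g1 g2)) (jac2 g1 g2) a b = 0 \<and> jac2 (jac2 g2 (jac2 g1 g2)) (jac2 g1 g2) a b = 0)"
  shows "fold_point g1 g2 (a, b) \<or> cusp_point g1 g2 (a, b)"
    "cusp_point g1 g2 (a, b) \<longleftrightarrow> jac2 g1 (jac2 g1 g2) a b = 0 \<and> jac2 g2 (jac2 g1 g2) a b = 0"
proof -
  let ?J = "jac2 g1 g2"
  have grad: "(dx1 ?J a b, dx2 ?J a b) \<noteq> (0, 0)"
  proof
    assume "(dx1 ?J a b, dx2 ?J a b) = (0, 0)"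
    then have "dx1 ?J a b = 0" "dx2 ?J a b = 0" by auto
    then have "jac2 X ?J a b = 0" for X by (rule jac2_grad0)
    then show False using nz by blast
  qed
  show "fold_point g1 g2 (a, b) \<or> cusp_point g1 g2 (a, b)"
    unfolding fold_point_def cusp_point_def Let_def using J0 grad nz by auto
  show "cusp_point g1 g2 (a, b) \<longleftrightarrow> jac2 g1 (jac2 g1 g2) a b = 0 \<and> jac2 g2 (jac2 g1 g2) a b = 0"
    unfolding cusp_point_def Let_def using J0 grad nz by auto
qed

lemma PS_mono: "PS R g \<Longrightarrow> R' \<le> R \<Longrightarrow> PS R' g"
  unfolding PS_def by (meson less_le_trans)

lemma CK_all_jac:
  assumes "PS R g1" "PS R g2"
  shows "CK k R (jac2 g1 g2)" "CK k R (jac2 g1 (jac2 g1 g2))" "CK k R (jac2 g2 (jac2 g1 g2))"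
proof -
  have J: "CK k R (jac2 g1 g2)" for k
    using CK_jac2[OF CK_PS[OF assms(1)] CK_PS[OF assms(2)]] by blast
  show "CK k R (jac2 g1 g2)" by (rule J)
  show "CK k R (jac2 g1 (jac2 g1 g2))" using CK_jac2[OF CK_PS[OF assms(1)] J] by blast
  show "CK k R (jac2 g2 (jac2 g1 g2))" using CK_jac2[OF CK_PS[OF assms(2)] J] by blast
qed

lemma disc2_sub_box2: "0 < \<epsilon> \<Longrightarrow> \<epsilon> < R \<Longrightarrow> disc2 \<epsilon> \<subseteq> box2 R"
proof
  fix p :: "real \<times> real" assume e: "0 < \<epsilon>" "\<epsilon> < R" and p: "p \<in> disc2 \<epsilon>"
  obtain a b where pab: "p = (a,b)" by (cases p)
  then have "a\<^sup>2 + b\<^sup>2 \<le> \<epsilon>\<^sup>2" using p by (simp add: disc2_def)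
  then have "a\<^sup>2 \<le> \<epsilon>\<^sup>2" "b\<^sup>2 \<le> \<epsilon>\<^sup>2" by (auto intro: add_nonneg_nonneg order_trans[rotated] simp: add_increasing add_increasing2)
  then have "\<bar>a\<bar> \<le> \<bar>\<epsilon>\<bar>" "\<bar>b\<bar> \<le> \<bar>\<epsilon>\<bar>" by (simp_all only: abs_le_square_iff)
  then have "\<bar>a\<bar> \<le> \<epsilon>" "\<bar>b\<bar> \<le> \<epsilon>" using e by auto
  then show "p \<in> box2 R" using e pab by (simp add: box2_def)
qed

lemma closed_disc2: "closed (disc2 r)"
proof -
  have "disc2 r = {p::real\<times>real. (fst p)\<^sup>2 + (snd p)\<^sup>2 \<le> r\<^sup>2}" by (auto simp: disc2_def)
  then show ?thesis by (simp add: closed_Collect_le continuous_intros)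
qed

lemma bounded_disc2: "bounded (disc2 r)"
proof -
  have "norm p \<le> \<bar>r\<bar>" if "p \<in> disc2 r" for p :: "real \<times> real"
  proof -
    obtain a b where pab: "p = (a,b)" by (cases p)
    have "a\<^sup>2 + b\<^sup>2 \<le> r\<^sup>2" using that pab by (simp add: disc2_def)
    then have "sqrt (a\<^sup>2 + b\<^sup>2) \<le> sqrt (r\<^sup>2)" by (rule real_sqrt_le_mono)
    then show ?thesis using pab by (simp add: norm_prod_def)
  qed
  then show ?thesis unfolding bounded_iff by blast
qed

lemma iso_zero:
  assumes cJ: "CK (Suc k) R J" and cF: "CK (Suc k) R F" and ab: "\<bar>a\<bar> < R" "\<bar>b\<bar> < R"
    and z: "J a b = 0" "F a b = 0" and nd: "jac2 F J a b \<noteq> 0"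
  shows "\<exists>e>0. \<forall>p. p \<noteq> (a,b) \<and> dist p (a,b) < e \<longrightarrow> \<not> (J (fst p) (snd p) = 0 \<and> F (fst p) (snd p) = 0)"
proof -
  let ?\<Phi> = "\<lambda>p. (J (fst p) (snd p), F (fst p) (snd p))"
  let ?L = "\<lambda>h::real\<times>real. (dx1 J a b * fst h + dx2 J a b * snd h, dx1 F a b * fst h + dx2 F a b * snd h)"
  have d: "(?\<Phi> has_derivative ?L) (at (a,b))"
    using CK_frechet[OF cJ ab] CK_frechet[OF cF ab] by (rule has_derivative_Pair)
  have det: "dx1 J a b * dx2 F a b - dx2 J a b * dx1 F a b \<noteq> 0"
    using nd by (simp add: jac2_def algebra_simps)
  have i: "inj ?L" by (rule inj_lin2[OF det])
  obtain e where e: "e > 0" "\<And>p. p \<noteq> (a,b) \<and> dist p (a,b) < e \<Longrightarrow> ?\<Phi> p \<noteq> ?\<Phi> (a,b)"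
    using isolated_by_deriv[OF d i] by blast
  show ?thesis
  proof (intro exI[of _ e] conjI allI impI)
    show "e > 0" by (rule e(1))
    fix p assume "p \<noteq> (a,b) \<and> dist p (a,b) < e"
    then have "?\<Phi> p \<noteq> (0,0)" using e(2) z by auto
    then show "\<not> (J (fst p) (snd p) = 0 \<and> F (fst p) (snd p) = 0)" by auto
  qed
qed

lemma slice:
  fixes g1 g2 :: "real \<Rightarrow> real \<Rightarrow> real" and Ws Dt :: "(real \<times> real) set"
  assumes P1: "PS R g1" and P2: "PS R g2" and e: "0 < \<epsilon>" "\<epsilon> < R"
    and VI: "\<And>a b. \<bar>a\<bar> < R \<Longrightarrow> \<bar>b\<bar> < R \<Longrightarrow> \<not> (jac2 g1 g2 a b = 0 \<and> jac2 g1 (jac2 g1 g2) a b = 0 \<and>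
         jac2 g2 (jac2 g1 g2) a b = 0 \<and> jac2 (jac2 g1 (jac2 g1 g2)) (jac2 g1 g2) a b = 0 \<and>
         jac2 (jac2 g2 (jac2 g1 g2)) (jac2 g1 g2) a b = 0)"
    and Wt: "\<And>a b. \<bar>a\<bar> < R \<Longrightarrow> \<bar>b\<bar> < R \<Longrightarrow> ((a,b) \<in> Ws \<longleftrightarrow>
         jac2 g1 g2 a b = 0 \<and> jac2 g1 (jac2 g1 g2) a b = 0 \<and> jac2 g2 (jac2 g1 g2) a b = 0)"
    and Dt: "Dt = {(a,b). (g1 a b, g2 a b) \<in> disc2 \<delta>} \<inter> disc2 r0"
    and Ds: "\<And>a b. (a,b) \<in> Dt \<Longrightarrow> a\<^sup>2 + b\<^sup>2 < \<epsilon>\<^sup>2"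
  shows "\<forall>p\<in>critical_set g1 g2 Dt. fold_point g1 g2 p \<or> cusp_point g1 g2 p"
    "{p \<in> critical_set g1 g2 Dt. cusp_point g1 g2 p} = {p \<in> Dt. p \<in> Ws}"
    "finite {p \<in> Dt. p \<in> Ws}"
proof -
  let ?J = "jac2 g1 g2"
  let ?F1 = "jac2 g1 ?J" and ?F2 = "jac2 g2 ?J"
  have indisc: "(a,b) \<in> disc2 \<epsilon>" if "(a,b) \<in> Dt" for a b
    using Ds[OF that] by (simp add: disc2_def)
  have inbox: "\<bar>a\<bar> < R" "\<bar>b\<bar> < R" if "(a,b) \<in> Dt" for a b
    using disc2_sub_box2[OF e] indisc[OF that] by (auto simp: box2_def)
  show "\<forall>p\<in>critical_set g1 g2 Dt. fold_point g1 g2 p \<or> cusp_point g1 g2 p"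
  proof
    fix p assume p: "p \<in> critical_set g1 g2 Dt"
    obtain a b where pab: "p = (a,b)" by (cases p)
    have D: "(a,b) \<in> Dt" and J0: "?J a b = 0" using p pab by (auto simp: critical_set_def)
    have "\<not> (?F1 a b = 0 \<and> ?F2 a b = 0 \<and> jac2 ?F1 ?J a b = 0 \<and> jac2 ?F2 ?J a b = 0)"
      using VI[OF inbox[OF D]] J0 by blast
    then show "fold_point g1 g2 p \<or> cusp_point g1 g2 p" using alg_point(1)[OF J0] pab by blast
  qed
  have memb: "(a,b) \<in> {p \<in> critical_set g1 g2 Dt. cusp_point g1 g2 p} \<longleftrightarrow> (a,b) \<in> {p \<in> Dt. p \<in> Ws}" for a b
  proof
    assume "(a,b) \<in> {p \<in> critical_set g1 g2 Dt. cusp_point g1 g2 p}"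
    then have D: "(a,b) \<in> Dt" and J0: "?J a b = 0" and c: "cusp_point g1 g2 (a,b)"
      by (auto simp: critical_set_def)
    have "\<not> (?F1 a b = 0 \<and> ?F2 a b = 0 \<and> jac2 ?F1 ?J a b = 0 \<and> jac2 ?F2 ?J a b = 0)"
      using VI[OF inbox[OF D]] J0 by blast
    then have "?F1 a b = 0 \<and> ?F2 a b = 0" using alg_point(2)[OF J0] c by blast
    then show "(a,b) \<in> {p \<in> Dt. p \<in> Ws}" using Wt[OF inbox[OF D]] D J0 by blast
  next
    assume "(a,b) \<in> {p \<in> Dt. p \<in> Ws}"
    then have D: "(a,b) \<in> Dt" and W: "(a,b) \<in> Ws" by auto
    then have z: "?J a b = 0" "?F1 a b = 0" "?F2 a b = 0" using Wt[OF inbox[OF D]] by auto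
    have "\<not> (?F1 a b = 0 \<and> ?F2 a b = 0 \<and> jac2 ?F1 ?J a b = 0 \<and> jac2 ?F2 ?J a b = 0)"
      using VI[OF inbox[OF D]] z(1) by blast
    then have "cusp_point g1 g2 (a,b)" using alg_point(2)[OF z(1)] z by blast
    then show "(a,b) \<in> {p \<in> critical_set g1 g2 Dt. cusp_point g1 g2 p}"
      using D z(1) by (auto simp: critical_set_def)
  qed
  show "{p \<in> critical_set g1 g2 Dt. cusp_point g1 g2 p} = {p \<in> Dt. p \<in> Ws}"
  proof (rule set_eqI)
    fix p :: "real \<times> real"
    obtain a b where pab: "p = (a,b)" by (cases p)
    show "p \<in> {p \<in> critical_set g1 g2 Dt. cusp_point g1 g2 p} \<longleftrightarrow> p \<in> {p \<in> Dt. p \<in> Ws}"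
      using memb pab by blast
  qed
  let ?S = "{p \<in> Dt. p \<in> Ws}"
  let ?D = "disc2 \<epsilon>"
  have DB: "?D \<subseteq> box2 R" by (rule disc2_sub_box2[OF e])
  have cont: "continuous_on ?D (\<lambda>p. h (fst p) (snd p))" if "CK 0 R h" for h
    using that DB by (auto intro: continuous_on_subset)
  have cJ: "CK k R ?J" and cF1: "CK k R ?F1" and cF2: "CK k R ?F2" for k
    using CK_all_jac[OF P1 P2] by blast+
  have cg1: "CK 0 R g1" and cg2: "CK 0 R g2" using CK_PS P1 P2 by blast+
  let ?G = "\<lambda>p. (g1 (fst p) (snd p), g2 (fst p) (snd p))"
  have Seq: "?S = (?D \<inter> ?G -` disc2 \<delta>) \<inter> (?D \<inter> disc2 r0) \<inter> (?D \<inter> (\<lambda>p. ?J (fst p) (snd p)) -` {0})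
      \<inter> (?D \<inter> (\<lambda>p. ?F1 (fst p) (snd p)) -` {0}) \<inter> (?D \<inter> (\<lambda>p. ?F2 (fst p) (snd p)) -` {0})"
  proof (rule set_eqI)
    fix p :: "real \<times> real"
    obtain a b where pab: "p = (a,b)" by (cases p)
    have "(a,b) \<in> ?S \<longleftrightarrow> (a,b) \<in> ?D \<and> (a,b) \<in> Dt \<and> ?J a b = 0 \<and> ?F1 a b = 0 \<and> ?F2 a b = 0"
      using indisc inbox Wt by blast
    also have "\<dots> \<longleftrightarrow> (a,b) \<in> (?D \<inter> ?G -` disc2 \<delta>) \<inter> (?D \<inter> disc2 r0) \<inter> (?D \<inter> (\<lambda>p. ?J (fst p) (snd p)) -` {0})
      \<inter> (?D \<inter> (\<lambda>p. ?F1 (fst p) (snd p)) -` {0}) \<inter> (?D \<inter> (\<lambda>p. ?F2 (fst p) (snd p)) -` {0})"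
      unfolding Dt by auto
    finally show "p \<in> ?S \<longleftrightarrow> p \<in> (?D \<inter> ?G -` disc2 \<delta>) \<inter> (?D \<inter> disc2 r0) \<inter> (?D \<inter> (\<lambda>p. ?J (fst p) (snd p)) -` {0})
      \<inter> (?D \<inter> (\<lambda>p. ?F1 (fst p) (snd p)) -` {0}) \<inter> (?D \<inter> (\<lambda>p. ?F2 (fst p) (snd p)) -` {0})"
      using pab by simp
  qed
  have clD: "closed ?D" by (rule closed_disc2)
  have "closed ?S"
    unfolding Seq
    by (intro closed_Int continuous_closed_preimage clD closed_disc2 closed_singleton
        continuous_on_Pair cont cg1 cg2 cJ cF1 cF2)
  moreover have "bounded ?S"
    by (rule bounded_subset[OF bounded_disc2[of \<epsilon>]]) (use indisc in auto)
  ultimately have cS: "compact ?S" by (simp add: compact_eq_bounded_closed)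
  have "\<not> z islimpt ?S" if z: "z \<in> ?S" for z
  proof
    assume lim: "z islimpt ?S"
    obtain a b where zab: "z = (a,b)" by (cases z)
    have D: "(a,b) \<in> Dt" and W: "(a,b) \<in> Ws" using z zab by auto
    have ab: "\<bar>a\<bar> < R" "\<bar>b\<bar> < R" using inbox[OF D] by auto
    have zz: "?J a b = 0" "?F1 a b = 0" "?F2 a b = 0" using Wt[OF ab] W by auto
    have "jac2 ?F1 ?J a b \<noteq> 0 \<or> jac2 ?F2 ?J a b \<noteq> 0" using VI[OF ab] zz by blast
    then obtain F where F: "F = ?F1 \<or> F = ?F2" "F a b = 0" "jac2 F ?J a b \<noteq> 0" using zz by blast
    have cF: "CK (Suc 0) R F" using F(1) cF1 cF2 by blast
    obtain e where e: "e > 0" "\<And>p. p \<noteq> (a,b) \<and> dist p (a,b) < e \<Longrightarrow> \<not> (?J (fst p) (snd p) = 0 \<and> F (fst p) (snd p) = 0)"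
      using iso_zero[OF cJ cF ab zz(1) F(2,3)] by blast
    obtain p where p: "p \<in> ?S" "p \<noteq> z" "dist p z < e" using lim e(1) unfolding islimpt_approachable by blast
    obtain c d where pcd: "p = (c,d)" by (cases p)
    have Dp: "(c,d) \<in> Dt" and Wp: "(c,d) \<in> Ws" using p pcd by auto
    have "?J c d = 0" "?F1 c d = 0" "?F2 c d = 0" using Wt[OF inbox[OF Dp]] Wp by auto
    then have "?J (fst p) (snd p) = 0 \<and> F (fst p) (snd p) = 0" using F(1) pcd by auto
    then show False using e(2)[of p] p zab by blast
  qed
  then have "finite (?S \<inter> ?S)" using finite_not_islimpt_in_compact[OF cS] by blast
  then show "finite ?S" by simp
qed

lemma shrink:
  fixes f1 f2 :: "real \<Rightarrow> real \<Rightarrow> real \<Rightarrow> real"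
  assumes e: "e > 0"
    and an: "\<forall>t a b. \<bar>t\<bar> < e \<and> a\<^sup>2 + b\<^sup>2 < (r0 + e)\<^sup>2 \<longrightarrow> analytic_at (t, a, b) f1 \<and> analytic_at (t, a, b) f2"
    and iso: "{(a, b). f1 0 a b = 0 \<and> f2 0 a b = 0} \<inter> disc2 r0 = {(0, 0)}"
    and r0: "r0 > 0" and eps: "\<epsilon> > 0"
  shows "\<exists>m>0. \<exists>\<tau>>0. \<forall>t a b. \<bar>t\<bar> < \<tau> \<and> (a, b) \<in> disc2 r0 \<and> \<epsilon>\<^sup>2 \<le> a\<^sup>2 + b\<^sup>2 \<longrightarrow>
           m \<le> (f1 t a b)\<^sup>2 + (f2 t a b)\<^sup>2"
proof -
  define \<phi> where "\<phi> p = (f1 (fst p) (fst (snd p)) (snd (snd p)))\<^sup>2 + (f2 (fst p) (fst (snd p)) (snd (snd p)))\<^sup>2"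
    for p :: "real \<times> real \<times> real"
  define K where "K = disc2 r0 \<inter> {x::real\<times>real. \<epsilon>\<^sup>2 \<le> (fst x)\<^sup>2 + (snd x)\<^sup>2}"
  show ?thesis
  proof (cases "K = {}")
    case True
    show ?thesis
    proof (intro exI[of _ 1] exI[of _ 1] conjI allI impI)
      fix t a b :: real assume "\<bar>t\<bar> < 1 \<and> (a, b) \<in> disc2 r0 \<and> \<epsilon>\<^sup>2 \<le> a\<^sup>2 + b\<^sup>2"
      then have "(a,b) \<in> K" by (simp add: K_def)
      then show "1 \<le> (f1 t a b)\<^sup>2 + (f2 t a b)\<^sup>2" using True by blast
    qed auto
  next
    case False
    have cK: "compact K"
    proof -
      have "closed {x::real\<times>real. \<epsilon>\<^sup>2 \<le> (fst x)\<^sup>2 + (snd x)\<^sup>2}"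
        by (simp add: closed_Collect_le continuous_intros)
      then have "closed K" unfolding K_def by (intro closed_Int closed_disc2)
      moreover have "bounded K" unfolding K_def by (rule bounded_subset[OF bounded_disc2]) auto
      ultimately show ?thesis by (simp add: compact_eq_bounded_closed)
    qed
    define Q where "Q = {-e/2..e/2} \<times> K"
    have cQ: "compact Q" unfolding Q_def by (intro compact_Times compact_Icc cK)
    have isc: "isCont \<phi> p" if "\<bar>fst p\<bar> < e" "p \<in> UNIV \<times> disc2 r0" for p
    proof -
      obtain t a b where p: "p = (t, a, b)" by (metis prod_cases3)
      have "a\<^sup>2 + b\<^sup>2 \<le> r0\<^sup>2" using that p by (simp add: disc2_def)
      also have "r0\<^sup>2 < (r0 + e)\<^sup>2" using r0 e by (simp add: power_strict_mono)
      finally have "a\<^sup>2 + b\<^sup>2 < (r0 + e)\<^sup>2" .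
      moreover have "\<bar>t\<bar> < e" using that p by simp
      ultimately have "analytic_at (t, a, b) f1 \<and> analytic_at (t, a, b) f2" using an by blast
      then have c1: "isCont (\<lambda>p. f1 (fst p) (fst (snd p)) (snd (snd p))) p"
        and c2: "isCont (\<lambda>p. f2 (fst p) (fst (snd p)) (snd (snd p))) p"
        using analytic_at_cont[of t a b f1] analytic_at_cont[of t a b f2] p by simp_all
      show ?thesis unfolding \<phi>_def by (intro continuous_intros c1 c2)
    qed
    have cphi: "continuous_on Q \<phi>"
    proof (rule continuous_at_imp_continuous_on, rule ballI)
      fix p assume "p \<in> Q"
      then obtain t x where p: "p = (t, x)" "t \<in> {-e/2..e/2}" "x \<in> K" unfolding Q_def by blast
      have "- (e/2) \<le> t" "t \<le> e/2" using p(2) by auto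
      then have "\<bar>t\<bar> < e" using e by linarith
      moreover have "x \<in> disc2 r0" using p(3) unfolding K_def by blast
      ultimately have "\<bar>fst p\<bar> < e" "p \<in> UNIV \<times> disc2 r0" using p(1) by simp_all
      then show "isCont \<phi> p" by (rule isc)
    qed
    have uc: "uniformly_continuous_on Q \<phi>" by (rule compact_uniformly_continuous[OF cphi cQ])
    have cpsi: "continuous_on K (\<lambda>x. \<phi> (0, x))"
    proof (rule continuous_at_imp_continuous_on, rule ballI)
      fix x assume x: "x \<in> K"
      have xd: "x \<in> disc2 r0" using x unfolding K_def by blast
      have "isCont \<phi> (0, x)" by (rule isc) (use xd e in simp_all)
      moreover have "isCont (\<lambda>x. (0::real, x)) x" by (intro continuous_intros)
      ultimately have "isCont (\<phi> \<circ> (\<lambda>x. (0::real, x))) x" using continuous_at_compose by blast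
      then show "isCont (\<lambda>x. \<phi> (0, x)) x" by (simp add: o_def)
    qed
    obtain xm where xm: "xm \<in> K" "\<And>y. y \<in> K \<Longrightarrow> \<phi> (0, xm) \<le> \<phi> (0, y)"
      using continuous_attains_inf[OF cK False cpsi] by blast
    have m0: "\<phi> (0, xm) > 0"
    proof -
      obtain a b where xab: "xm = (a, b)" by (cases xm)
      have "(a,b) \<in> disc2 r0" "\<epsilon>\<^sup>2 \<le> a\<^sup>2 + b\<^sup>2" using xm(1) xab by (auto simp: K_def)
      moreover have "(a, b) \<noteq> (0,0)" using \<open>\<epsilon>\<^sup>2 \<le> a\<^sup>2 + b\<^sup>2\<close> eps by auto
      ultimately have "\<not> (f1 0 a b = 0 \<and> f2 0 a b = 0)" using iso by blast
      then have "(f1 0 a b)\<^sup>2 + (f2 0 a b)\<^sup>2 > 0" by (simp add: sum_power2_gt_zero_iff)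
      then show ?thesis using xab by (simp add: \<phi>_def)
    qed
    define m where "m = \<phi> (0, xm) / 2"
    have m: "m > 0" using m0 by (simp add: m_def)
    obtain d where d: "d > 0" "\<And>x x'. x \<in> Q \<Longrightarrow> x' \<in> Q \<Longrightarrow> dist x' x < d \<Longrightarrow> dist (\<phi> x') (\<phi> x) < m"
    proof -
      have "\<forall>e>0. \<exists>d>0. \<forall>x\<in>Q. \<forall>x'\<in>Q. dist x' x < d \<longrightarrow> dist (\<phi> x') (\<phi> x) < e"
        using uc unfolding uniformly_continuous_on_def .
      then obtain d where "d > 0" "\<forall>x\<in>Q. \<forall>x'\<in>Q. dist x' x < d \<longrightarrow> dist (\<phi> x') (\<phi> x) < m"
        using m by blast
      then show ?thesis using that by blast
    qed
    have tpos: "min d (e/2) > 0" using d e by simp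
    have main: "\<forall>t a b. \<bar>t\<bar> < min d (e/2) \<and> (a, b) \<in> disc2 r0 \<and> \<epsilon>\<^sup>2 \<le> a\<^sup>2 + b\<^sup>2 \<longrightarrow>
           m \<le> (f1 t a b)\<^sup>2 + (f2 t a b)\<^sup>2"
    proof (intro allI impI)
      fix t a b :: real assume H: "\<bar>t\<bar> < min d (e/2) \<and> (a, b) \<in> disc2 r0 \<and> \<epsilon>\<^sup>2 \<le> a\<^sup>2 + b\<^sup>2"
      then have ab: "(a,b) \<in> K" by (simp add: K_def)
      have "\<bar>t\<bar> < e/2" using H by simp
      then have "- (e/2) \<le> t" "t \<le> e/2" by linarith+
      then have "t \<in> {-e/2..e/2}" by simp
      then have Q1: "(t, a, b) \<in> Q" using ab unfolding Q_def by blast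
      have "(0::real) \<in> {-e/2..e/2}" using e by simp
      then have Q0: "(0, a, b) \<in> Q" using ab unfolding Q_def by blast
      have "dist (t, a, b) (0, a, b) = \<bar>t\<bar>" by (simp add: dist_Pair_Pair dist_real_def)
      then have "dist (t, a, b) (0, a, b) < d" using H by simp
      then have "dist (\<phi> (t, a, b)) (\<phi> (0, a, b)) < m" using d(2)[OF Q0 Q1] by simp
      moreover have "\<phi> (0, xm) \<le> \<phi> (0, a, b)" using xm(2)[OF ab] by simp
      ultimately have "\<phi> (t, a, b) \<ge> m" unfolding m_def dist_real_def by linarith
      then show "m \<le> (f1 t a b)\<^sup>2 + (f2 t a b)\<^sup>2" by (simp add: \<phi>_def)
    qed
    show ?thesis using m tpos main by blast
  qed
qed

theorem lemma6p3:
  fixes f1 f2 :: "real \<Rightarrow> real \<Rightarrow> real \<Rightarrow> real"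
    and r0 :: real
    and W :: "(real \<times> real \<times> real) set"
  assumes an1: "analytic0 f1" and an2: "analytic0 f2"
    and f0: "f1 0 0 0 = 0" "f2 0 0 0 = 0"
    and fin_f: "finite_codim [tcoord, f1, f2]"
    and fin_F: "finite_codim [tcoord, jacx f1 (jacx f1 f2), jacx f2 (jacx f1 f2)]"
    and J0: "jacx f1 f2 0 0 0 = 0"
    and fin_dJ: "finite_codim [tcoord, dxt1 (jacx f1 f2), dxt2 (jacx f1 f2)]"
    and VI': "zero_set_is_origin [jacx f1 f2, jacx f1 (jacx f1 f2), jacx f2 (jacx f1 f2),
               jacx (jacx f1 (jacx f1 f2)) (jacx f1 f2), jacx (jacx f2 (jacx f1 f2)) (jacx f1 f2)]"
    and r0: "r0 > 0"
    and rep_dom: "\<exists>e>0. \<forall>t a b. \<bar>t\<bar> < e \<and> a\<^sup>2 + b\<^sup>2 < (r0 + e)\<^sup>2 \<longrightarrow>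
                    analytic_at (t, a, b) f1 \<and> analytic_at (t, a, b) f2"
    and r0_iso: "{(a, b). f1 0 a b = 0 \<and> f2 0 a b = 0} \<inter> disc2 r0 = {(0, 0)}"
    and W: "zero_set_rep [jacx f1 f2, jacx f1 (jacx f1 f2), jacx f2 (jacx f1 f2)] W"
  shows "\<exists>\<delta>0>0. \<forall>\<delta>. 0 < \<delta> \<and> \<delta> < \<delta>0 \<longrightarrow>
          (\<exists>\<tau>>0. \<forall>t. t \<noteq> 0 \<and> \<bar>t\<bar> < \<tau> \<longrightarrow>
            (let Dt = tilde_disc f1 f2 r0 \<delta> t;
                 C = critical_set (f1 t) (f2 t) Dt;
                 \<Sigma> = {(a, b) \<in> Dt. (t, a, b) \<in> W}
             in (\<forall>p\<in>C. fold_point (f1 t) (f2 t) p \<or> cusp_point (f1 t) (f2 t) p) \<and>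
                {p \<in> C. cusp_point (f1 t) (f2 t) p} = \<Sigma> \<and>
                finite \<Sigma>))"
proof -
  obtain r1 where r1: "r1 > 0" "\<And>t. \<bar>t\<bar> < r1 \<Longrightarrow> PS r1 (f1 t)" using analytic0_PS[OF an1] by blast
  obtain r2 where r2: "r2 > 0" "\<And>t. \<bar>t\<bar> < r2 \<Longrightarrow> PS r2 (f2 t)" using analytic0_PS[OF an2] by blast
  let ?J = "jacx f1 f2"
  obtain eV where eV: "eV > 0" and VIn: "\<And>t a b. \<bar>t\<bar> < eV \<Longrightarrow> \<bar>a\<bar> < eV \<Longrightarrow> \<bar>b\<bar> < eV \<Longrightarrow>
      ((\<forall>g\<in>set [jacx f1 f2, jacx f1 (jacx f1 f2), jacx f2 (jacx f1 f2),
               jacx (jacx f1 (jacx f1 f2)) (jacx f1 f2), jacx (jacx f2 (jacx f1 f2)) (jacx f1 f2)]. g t a b = 0)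
       \<longleftrightarrow> (t = 0 \<and> a = 0 \<and> b = 0))"
    using VI' unfolding zero_set_is_origin_def near0_def by blast
  obtain eW where eW: "eW > 0" and Wn: "\<And>t a b. \<bar>t\<bar> < eW \<Longrightarrow> \<bar>a\<bar> < eW \<Longrightarrow> \<bar>b\<bar> < eW \<Longrightarrow>
      ((t, a, b) \<in> W \<longleftrightarrow> (\<forall>g\<in>set [jacx f1 f2, jacx f1 (jacx f1 f2), jacx f2 (jacx f1 f2)]. g t a b = 0))"
    using W unfolding zero_set_rep_def near0_def by blast
  define R where "R = min (min r1 r2) (min eV eW)"
  have R: "R > 0" "R \<le> r1" "R \<le> r2" "R \<le> eV" "R \<le> eW" using r1 r2 eV eW by (auto simp: R_def)
  define \<epsilon> where "\<epsilon> = R/2"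
  have eps: "0 < \<epsilon>" "\<epsilon> < R" using R by (auto simp: \<epsilon>_def)
  obtain e where e: "e > 0" and an: "\<forall>t a b. \<bar>t\<bar> < e \<and> a\<^sup>2 + b\<^sup>2 < (r0 + e)\<^sup>2 \<longrightarrow>
                    analytic_at (t, a, b) f1 \<and> analytic_at (t, a, b) f2"
    using rep_dom by blast
  obtain m \<tau>0 where m: "m > 0" and \<tau>0: "\<tau>0 > 0" and sh: "\<And>t a b. \<bar>t\<bar> < \<tau>0 \<Longrightarrow> (a, b) \<in> disc2 r0 \<Longrightarrow>
      \<epsilon>\<^sup>2 \<le> a\<^sup>2 + b\<^sup>2 \<Longrightarrow> m \<le> (f1 t a b)\<^sup>2 + (f2 t a b)\<^sup>2"
    using shrink[OF e an r0_iso r0 eps(1)] by blast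
  show ?thesis
  proof (rule exI[of _ "sqrt m"], intro conjI allI impI)
    show "sqrt m > 0" using m by simp
    fix \<delta> :: real assume d: "0 < \<delta> \<and> \<delta> < sqrt m"
    have dm: "\<delta>\<^sup>2 < m"
    proof -
      have "\<delta>\<^sup>2 < (sqrt m)\<^sup>2" using d by (intro power_strict_mono) auto
      then show ?thesis using m by simp
    qed
    show "\<exists>\<tau>>0. \<forall>t. t \<noteq> 0 \<and> \<bar>t\<bar> < \<tau> \<longrightarrow>
            (let Dt = tilde_disc f1 f2 r0 \<delta> t;
                 C = critical_set (f1 t) (f2 t) Dt;
                 \<Sigma> = {(a, b) \<in> Dt. (t, a, b) \<in> W}
             in (\<forall>p\<in>C. fold_point (f1 t) (f2 t) p \<or> cusp_point (f1 t) (f2 t) p) \<and>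
                {p \<in> C. cusp_point (f1 t) (f2 t) p} = \<Sigma> \<and>
                finite \<Sigma>)"
    proof (rule exI[of _ "min \<tau>0 R"], intro conjI allI impI)
      show "min \<tau>0 R > 0" using \<tau>0 R by simp
      fix t :: real assume t: "t \<noteq> 0 \<and> \<bar>t\<bar> < min \<tau>0 R"
      define Dt where "Dt = tilde_disc f1 f2 r0 \<delta> t"
      define Ws where "Ws = {(a, b). (t, a, b) \<in> W}"
      have tR: "\<bar>t\<bar> < R" "\<bar>t\<bar> < \<tau>0" using t by auto
      have "\<bar>t\<bar> < r1" using tR(1) R(2) by linarith
      then have P1: "PS R (f1 t)" using PS_mono[OF r1(2) R(2)] by blast
      have "\<bar>t\<bar> < r2" using tR(1) R(3) by linarith
      then have P2: "PS R (f2 t)" using PS_mono[OF r2(2) R(3)] by blast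
      have VI: "\<not> (jac2 (f1 t) (f2 t) a b = 0 \<and> jac2 (f1 t) (jac2 (f1 t) (f2 t)) a b = 0 \<and>
         jac2 (f2 t) (jac2 (f1 t) (f2 t)) a b = 0 \<and> jac2 (jac2 (f1 t) (jac2 (f1 t) (f2 t))) (jac2 (f1 t) (f2 t)) a b = 0 \<and>
         jac2 (jac2 (f2 t) (jac2 (f1 t) (f2 t))) (jac2 (f1 t) (f2 t)) a b = 0)"
        if "\<bar>a\<bar> < R" "\<bar>b\<bar> < R" for a b
      proof -
        have "\<bar>t\<bar> < eV" using tR(1) R(4) by linarith
        moreover have "\<bar>a\<bar> < eV" using that(1) R(4) by linarith
        moreover have "\<bar>b\<bar> < eV" using that(2) R(4) by linarith
        ultimately have V: "((\<forall>g\<in>set [jacx f1 f2, jacx f1 (jacx f1 f2), jacx f2 (jacx f1 f2),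
               jacx (jacx f1 (jacx f1 f2)) (jacx f1 f2), jacx (jacx f2 (jacx f1 f2)) (jacx f1 f2)]. g t a b = 0)
       \<longleftrightarrow> (t = 0 \<and> a = 0 \<and> b = 0))" by (rule VIn)
        have "\<not> (t = 0 \<and> a = 0 \<and> b = 0)" using t by simp
        with V show ?thesis by (simp add: jacx_def)
      qed
      have Wt: "((a,b) \<in> Ws \<longleftrightarrow>
         jac2 (f1 t) (f2 t) a b = 0 \<and> jac2 (f1 t) (jac2 (f1 t) (f2 t)) a b = 0 \<and> jac2 (f2 t) (jac2 (f1 t) (f2 t)) a b = 0)"
        if "\<bar>a\<bar> < R" "\<bar>b\<bar> < R" for a b
      proof -
        have "\<bar>t\<bar> < eW" using tR(1) R(5) by linarith
        moreover have "\<bar>a\<bar> < eW" using that(1) R(5) by linarith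
        moreover have "\<bar>b\<bar> < eW" using that(2) R(5) by linarith
        ultimately have V: "((t, a, b) \<in> W \<longleftrightarrow> (\<forall>g\<in>set [jacx f1 f2, jacx f1 (jacx f1 f2), jacx f2 (jacx f1 f2)]. g t a b = 0))"
          by (rule Wn)
        then show ?thesis by (simp add: jacx_def Ws_def)
      qed
      have DtE: "Dt = {(a,b). (f1 t a b, f2 t a b) \<in> disc2 \<delta>} \<inter> disc2 r0"
        by (simp add: Dt_def tilde_disc_def)
      have Ds: "a\<^sup>2 + b\<^sup>2 < \<epsilon>\<^sup>2" if ab: "(a,b) \<in> Dt" for a b
      proof (rule ccontr)
        assume "\<not> a\<^sup>2 + b\<^sup>2 < \<epsilon>\<^sup>2"
        then have le: "\<epsilon>\<^sup>2 \<le> a\<^sup>2 + b\<^sup>2" by simp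
        have inr0: "(a,b) \<in> disc2 r0" and ind: "(f1 t a b, f2 t a b) \<in> disc2 \<delta>" using ab DtE by auto
        have "m \<le> (f1 t a b)\<^sup>2 + (f2 t a b)\<^sup>2" by (rule sh[OF tR(2) inr0 le])
        moreover have "(f1 t a b)\<^sup>2 + (f2 t a b)\<^sup>2 \<le> \<delta>\<^sup>2" using ind by (simp add: disc2_def)
        ultimately show False using dm by linarith
      qed
      note S = slice[OF P1 P2 eps VI Wt DtE Ds]
      have Seq: "{(a, b) \<in> Dt. (t, a, b) \<in> W} = {p \<in> Dt. p \<in> Ws}"
      proof (rule set_eqI)
        fix p :: "real \<times> real"
        obtain a b where pab: "p = (a,b)" by (cases p)
        show "p \<in> {(a, b) \<in> Dt. (t, a, b) \<in> W} \<longleftrightarrow> p \<in> {p \<in> Dt. p \<in> Ws}"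
          unfolding pab Ws_def by simp
      qed
      show "let Dt = tilde_disc f1 f2 r0 \<delta> t;
                 C = critical_set (f1 t) (f2 t) Dt;
                 \<Sigma> = {(a, b) \<in> Dt. (t, a, b) \<in> W}
             in (\<forall>p\<in>C. fold_point (f1 t) (f2 t) p \<or> cusp_point (f1 t) (f2 t) p) \<and>
                {p \<in> C. cusp_point (f1 t) (f2 t) p} = \<Sigma> \<and>
                finite \<Sigma>"
        unfolding Let_def Dt_def[symmetric] Seq by (intro conjI S(1) S(2) S(3))
    qed
  qed
qed

end
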